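(* Let $f:\mathcal{D}_M\to\mathbb{R}$ be continuous, where $M>0$ and $$\mathcal{D}_M=\{(t,x,y,z):\ 0\le t\le 1,\ |x|\le M_0M,\ |y|\le M_1M,\ |z|\le M_2M\},\qquad M_0=\tfrac{1}{12},\ M_1=\tfrac18,\ M_2=\tfrac12 .$$ Assume there are constants $L_0,L_1,L_2\ge 0$ such that $|f(t,x,y,z)|\le M$ for all $(t,x,y,z)\in\mathcal{D}_M$, $$|f(t,x_2,y_2,z_2)-f(t,x_1,y_1,z_1)|\le L_0|x_2-x_1|+L_1|y_2-y_1|+L_2|z_2-z_1|$$ for all $(t,x_i,y_i,z_i)\in\mathcal{D}_M$ ($i=1,2$), and $q:=L_0M_0+L_1M_1+L_2M_2<1$. Consider the iteration: $\varphi_0(t)=f(t,0,0,0)$ and, for $k=0,1,\dots$, $$u_k(t)=\int_0^1G_0(t,s)\varphi_k(s)\,ds,\quad y_k(t)=\int_0^1G_1(t,s)\varphi_k(s)\,ds,\quad z_k(t)=\int_0^1G_2(t,s)\varphi_k(s)\,ds,$$ $$\varphi_{k+1}(t)=f(t,u_k(t),y_k(t),z_k(t)),$$ and set $p_k=\dfrac{q^k}{1-q}\|\varphi_1-\varphi_0\|$, where $\|\cdot\|$ is the maximum norm on $[0,1]$. Let $u$ be the (unique) solution of the boundary value problem $$u'''(t)=f(t,u(t),u'(t),u''(t)),\ 0<t<1,\qquad u(0)=0,\ u'(0)=0,\ u'(1)=0,$$ satisfying $|u(t)|\le M_0M$, $|u'(t)|\le M_1M$, $|u''(t)|\le M_2M$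 on $[0,1]$. Then the iterative method converges and for all $k\ge 0$ $$\|u_k-u\|\le M_0p_k,\qquad \|u_k'-u'\|\le M_1p_k,\qquad \|u_k''-u''\|\le M_2p_k .$$
   Context: The kernels are $G_0(t,s)=\frac{s}{2}(t^2-2t+s)$ for $0\le s\le t\le1$ and $G_0(t,s)=\frac{t^2}{2}(s-1)$ for $0\le t\le s\le 1$; $G_1(t,s)=s(t-1)$ for $0\le s\le t\le 1$ and $G_1(t,s)=t(s-1)$ for $0\le t\le s\le 1$; $G_2(t,s)=s$ for $0\le s\le t\le 1$ and $G_2(t,s)=s-1$ for $0\le t\le s\le 1$. ($G_0$ is the Green function of $u'''=\varphi$, $u(0)=u'(0)=u'(1)=0$, and $G_1=\partial_tG_0$, $G_2=\partial_t^2G_0$.) The constants satisfy $M_n=\max_{0\le t\le 1}\int_0^1|G_n(t,s)|\,ds$ for $n=0,1,2$. Under these hypotheses the boundary value problem has exactly one solution with the stated bounds. *)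

theory Defs
  imports "HOL-Analysis.Analysis"
begin

definition G0 :: "real \<Rightarrow> real \<Rightarrow> real" where
  "G0 t s = (if s \<le> t then s / 2 * (t\<^sup>2 - 2 * t + s) else t\<^sup>2 / 2 * (s - 1))"

definition G1 :: "real \<Rightarrow> real \<Rightarrow> real" where
  "G1 t s = (if s \<le> t then s * (t - 1) else t * (s - 1))"

definition G2 :: "real \<Rightarrow> real \<Rightarrow> real" where
  "G2 t s = (if s \<le> t then s else s - 1)"

definition M0 :: real where "M0 = 1 / 12"
definition M1 :: real where "M1 = 1 / 8"
definition M2 :: real where "M2 = 1 / 2"

definition DM :: "real \<Rightarrow> (real \<times> real \<times> real \<times> real) set" where
  "DM M = {(t, x, y, z). 0 \<le> t \<and> t \<le> 1 \<and> \<bar>x\<bar> \<le> M0 * M \<and> \<bar>y\<bar> \<le> M1 * M \<and> \<bar>z\<bar> \<le> M2 * M}"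

definition intG :: "(real \<Rightarrow> real \<Rightarrow> real) \<Rightarrow> (real \<Rightarrow> real) \<Rightarrow> real \<Rightarrow> real" where
  "intG G \<phi> t = integral {0..1} (\<lambda>s. G t s * \<phi> s)"

primrec phi_it :: "(real \<Rightarrow> real \<Rightarrow> real \<Rightarrow> real \<Rightarrow> real) \<Rightarrow> nat \<Rightarrow> real \<Rightarrow> real" where
  "phi_it f 0 = (\<lambda>t. f t 0 0 0)"
| "phi_it f (Suc k) = (\<lambda>t. f t (intG G0 (phi_it f k) t) (intG G1 (phi_it f k) t) (intG G2 (phi_it f k) t))"

definition maxnorm :: "(real \<Rightarrow> real) \<Rightarrow> real" where
  "maxnorm g = Sup ((\<lambda>t. \<bar>g t\<bar>) ` {0..1})"

end

theory Submission
  imports Defs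
begin


lemma split_hasint:
  fixes h h1 h2 :: "real \<Rightarrow> real"
  assumes t: "0 \<le> t" "t \<le> 1" and c1: "continuous_on {0..1} h1" and c2: "continuous_on {0..1} h2"
    and e1: "\<And>s. 0 \<le> s \<Longrightarrow> s \<le> t \<Longrightarrow> h s = h1 s"
    and e2: "\<And>s. t < s \<Longrightarrow> s \<le> 1 \<Longrightarrow> h s = h2 s"
  shows "(h has_integral (integral {0..t} h1 + integral {t..1} h2)) {0..1}"
proof (rule has_integral_combine[OF t])
  have "h1 integrable_on {0..t}"
    by (rule integrable_continuous_interval, rule continuous_on_subset[OF c1]) (use t in auto)
  then have "(h1 has_integral integral {0..t} h1) {0..t}" by (simp add: has_integral_integral)
  then show "(h has_integral integral {0..t} h1) {0..t}"
    by (rule has_integral_spike_finite[where S="{}" and f=h1, rotated 2]) (auto simp: e1)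
  have "h2 integrable_on {t..1}"
    by (rule integrable_continuous_interval, rule continuous_on_subset[OF c2]) (use t in auto)
  then have "(h2 has_integral integral {t..1} h2) {t..1}" by (simp add: has_integral_integral)
  then show "(h has_integral integral {t..1} h2) {t..1}"
    by (rule has_integral_spike_finite[where S="{t}" and f=h2, rotated 2]) (auto simp: e2)
qed

definition P :: "(real \<Rightarrow> real) \<Rightarrow> (real \<Rightarrow> real) \<Rightarrow> real \<Rightarrow> real" where
  "P \<phi> g t = integral {0..t} (\<lambda>s. g s * \<phi> s)"

lemma P_tail:
  assumes "continuous_on {0..1} \<phi>" "continuous_on {0..1} g" "0 \<le> t" "t \<le> 1"
  shows "integral {t..1} (\<lambda>s. g s * \<phi> s) = P \<phi> g 1 - P \<phi> g t"
proof -
  have "(\<lambda>s. g s * \<phi> s) integrable_on {0..1}"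
    by (intro integrable_continuous_interval continuous_intros assms)
  from Henstock_Kurzweil_Integration.integral_combine[OF assms(3,4) this] show ?thesis unfolding P_def by simp
qed

lemma P_int:
  fixes \<phi> g :: "real \<Rightarrow> real"
  assumes "continuous_on {0..1} \<phi>" "continuous_on {0..1} g" "0 \<le> t" "t \<le> 1"
  shows "(\<lambda>s. g s * \<phi> s) integrable_on {0..t}"
proof -
  have "continuous_on {0..1} (\<lambda>s. g s * \<phi> s)" by (intro continuous_intros assms)
  then have "continuous_on {0..t} (\<lambda>s. g s * \<phi> s)" by (rule continuous_on_subset) (use assms in auto)
  then show ?thesis by (rule integrable_continuous_interval)
qed

lemma P_deriv:
  assumes "continuous_on {0..1} \<phi>" "continuous_on {0..1} g" "t \<in> {0..1}"
  shows "(P \<phi> g has_real_derivative (g t * \<phi> t)) (at t within {0..1})"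
proof -
  have "continuous_on {0..1} (\<lambda>s. g s * \<phi> s)" by (intro continuous_intros assms)
  from integral_has_vector_derivative[OF this assms(3)] show ?thesis
    unfolding P_def has_real_derivative_iff_has_vector_derivative by simp
qed

lemma P_cont:
  assumes "continuous_on {0..1} \<phi>" "continuous_on {0..1} g"
  shows "continuous_on {0..1} (P \<phi> g)"
  unfolding P_def
  by (rule indefinite_integral_continuous_1, intro integrable_continuous_interval continuous_intros assms)

lemma P_lin2:
  assumes c: "continuous_on {0..1} \<phi>" "continuous_on {0..1} g1" "continuous_on {0..1} g2" and t: "0 \<le> t" "t \<le> 1"
  shows "integral {0..t} (\<lambda>s. a * (g1 s * \<phi> s) + b * (g2 s * \<phi> s)) = a * P \<phi> g1 t + b * P \<phi> g2 t"
proof -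
  have ia: "(\<lambda>s. a * (g1 s * \<phi> s)) integrable_on {0..t}"
    by (rule integrable_on_mult_right[OF P_int[OF c(1,2) t]])
  have ib: "(\<lambda>s. b * (g2 s * \<phi> s)) integrable_on {0..t}"
    by (rule integrable_on_mult_right[OF P_int[OF c(1,3) t]])
  show ?thesis unfolding P_def by (simp add: integral_add[OF ia ib])
qed

lemma intG0_formula:
  assumes c: "continuous_on {0..1} \<phi>" and t: "0 \<le> t" "t \<le> 1"
  shows "intG G0 \<phi> t = (t\<^sup>2 - 2*t)/2 * P \<phi> (\<lambda>s. s) t + 1/2 * P \<phi> (\<lambda>s. s\<^sup>2) t
            + t\<^sup>2/2 * (P \<phi> (\<lambda>s. s - 1) 1 - P \<phi> (\<lambda>s. s - 1) t)"
proof -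
  have "((\<lambda>s. G0 t s * \<phi> s) has_integral
     (integral {0..t} (\<lambda>s. (t\<^sup>2 - 2*t)/2 * (s * \<phi> s) + 1/2 * (s\<^sup>2 * \<phi> s))
      + integral {t..1} (\<lambda>s. t\<^sup>2/2 * ((s - 1) * \<phi> s)))) {0..1}"
    by (rule split_hasint[OF t]) (auto intro!: continuous_intros c simp: G0_def field_simps power2_eq_square)
  moreover have "integral {0..t} (\<lambda>s. (t\<^sup>2 - 2*t)/2 * (s * \<phi> s) + 1/2 * (s\<^sup>2 * \<phi> s))
      = (t\<^sup>2 - 2*t)/2 * P \<phi> (\<lambda>s. s) t + 1/2 * P \<phi> (\<lambda>s. s\<^sup>2) t"
    by (rule P_lin2[OF c _ _ t]) (auto intro!: continuous_intros)
  moreover have "integral {t..1} (\<lambda>s. t\<^sup>2/2 * ((s - 1) * \<phi> s)) = t\<^sup>2/2 * (P \<phi> (\<lambda>s. s - 1) 1 - P \<phi> (\<lambda>s. s - 1) t)"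
    using P_tail[OF c _ t, of "\<lambda>s. s - 1"] by (simp add: continuous_intros)
  ultimately show ?thesis unfolding intG_def by (simp add: integral_unique)
qed

lemma intG1_formula:
  assumes c: "continuous_on {0..1} \<phi>" and t: "0 \<le> t" "t \<le> 1"
  shows "intG G1 \<phi> t = (t - 1) * P \<phi> (\<lambda>s. s) t + t * (P \<phi> (\<lambda>s. s - 1) 1 - P \<phi> (\<lambda>s. s - 1) t)"
proof -
  have "((\<lambda>s. G1 t s * \<phi> s) has_integral
     (integral {0..t} (\<lambda>s. (t - 1) * (s * \<phi> s)) + integral {t..1} (\<lambda>s. t * ((s - 1) * \<phi> s)))) {0..1}"
    by (rule split_hasint[OF t]) (auto intro!: continuous_intros c simp: G1_def)
  then have I: "intG G1 \<phi> t = integral {0..t} (\<lambda>s. (t - 1) * (s * \<phi> s)) + integral {t..1} (\<lambda>s. t * ((s - 1) * \<phi> s))"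
    unfolding intG_def by (rule integral_unique)
  have e1: "integral {0..t} (\<lambda>s. (t - 1) * (s * \<phi> s)) = (t - 1) * P \<phi> (\<lambda>s. s) t"
    unfolding P_def by simp
  have e2: "integral {t..1} (\<lambda>s. t * ((s - 1) * \<phi> s)) = t * (P \<phi> (\<lambda>s. s - 1) 1 - P \<phi> (\<lambda>s. s - 1) t)"
    using P_tail[OF c _ t, of "\<lambda>s. s - 1"] by (simp add: continuous_intros)
  show ?thesis unfolding I e1 e2 ..
qed

lemma intG2_formula:
  assumes c: "continuous_on {0..1} \<phi>" and t: "0 \<le> t" "t \<le> 1"
  shows "intG G2 \<phi> t = P \<phi> (\<lambda>s. s) t + (P \<phi> (\<lambda>s. s - 1) 1 - P \<phi> (\<lambda>s. s - 1) t)"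
proof -
  have "((\<lambda>s. G2 t s * \<phi> s) has_integral
     (integral {0..t} (\<lambda>s. s * \<phi> s) + integral {t..1} (\<lambda>s. (s - 1) * \<phi> s))) {0..1}"
    by (rule split_hasint[OF t]) (auto intro!: continuous_intros c simp: G2_def)
  moreover have "integral {t..1} (\<lambda>s. (s - 1) * \<phi> s) = (P \<phi> (\<lambda>s. s - 1) 1 - P \<phi> (\<lambda>s. s - 1) t)"
    using P_tail[OF c _ t, of "\<lambda>s. s - 1"] by (simp add: continuous_intros)
  ultimately show ?thesis unfolding intG_def P_def by (simp add: integral_unique)
qed

lemma intG_integrable:
  assumes c: "continuous_on {0..1} \<phi>" and t: "0 \<le> t" "t \<le> 1"
  shows "(\<lambda>s. G0 t s * \<phi> s) integrable_on {0..1}" "(\<lambda>s. G1 t s * \<phi> s) integrable_on {0..1}"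
    "(\<lambda>s. G2 t s * \<phi> s) integrable_on {0..1}"
proof -
  have "((\<lambda>s. G0 t s * \<phi> s) has_integral
     (integral {0..t} (\<lambda>s. (s/2*(t\<^sup>2-2*t+s)) * \<phi> s)
      + integral {t..1} (\<lambda>s. t\<^sup>2/2 * (s - 1) * \<phi> s))) {0..1}"
    by (rule split_hasint[OF t]) (auto intro!: continuous_intros c simp: G0_def)
  then show "(\<lambda>s. G0 t s * \<phi> s) integrable_on {0..1}" by blast
  have "((\<lambda>s. G1 t s * \<phi> s) has_integral
     (integral {0..t} (\<lambda>s. (t - 1) * (s * \<phi> s)) + integral {t..1} (\<lambda>s. t * ((s - 1) * \<phi> s)))) {0..1}"
    by (rule split_hasint[OF t]) (auto intro!: continuous_intros c simp: G1_def)
  then show "(\<lambda>s. G1 t s * \<phi> s) integrable_on {0..1}" by blast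
  have "((\<lambda>s. G2 t s * \<phi> s) has_integral
     (integral {0..t} (\<lambda>s. s * \<phi> s) + integral {t..1} (\<lambda>s. (s - 1) * \<phi> s))) {0..1}"
    by (rule split_hasint[OF t]) (auto intro!: continuous_intros c simp: G2_def)
  then show "(\<lambda>s. G2 t s * \<phi> s) integrable_on {0..1}" by blast
qed

lemma P_zero[simp]: "P \<phi> g 0 = 0"
  unfolding P_def by simp

lemma intG_bc:
  assumes c: "continuous_on {0..1} \<phi>"
  shows "intG G0 \<phi> 0 = 0" "intG G1 \<phi> 0 = 0" "intG G1 \<phi> 1 = 0"
  using intG0_formula[OF c, of 0] intG1_formula[OF c, of 0] intG1_formula[OF c, of 1] by simp_all

lemma intG0_deriv:
  assumes c: "continuous_on {0..1} \<phi>" and t: "t \<in> {0..1}"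
  shows "(intG G0 \<phi> has_real_derivative intG G1 \<phi> t) (at t within {0..1})"
proof -
  let ?F = "\<lambda>t. (t\<^sup>2 - 2*t)/2 * P \<phi> (\<lambda>s. s) t + 1/2 * P \<phi> (\<lambda>s. s\<^sup>2) t
            + t\<^sup>2/2 * (P \<phi> (\<lambda>s. s - 1) 1 - P \<phi> (\<lambda>s. s - 1) t)"
  have "(?F has_real_derivative ((t - 1) * P \<phi> (\<lambda>s. s) t + t * (P \<phi> (\<lambda>s. s - 1) 1 - P \<phi> (\<lambda>s. s - 1) t))) (at t within {0..1})"
    by (auto intro!: derivative_eq_intros P_deriv[OF c _ t] continuous_intros simp: field_simps power2_eq_square)
  then have "(?F has_real_derivative intG G1 \<phi> t) (at t within {0..1})"
    using intG1_formula[OF c] t by simp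
  then show ?thesis
    by (rule has_field_derivative_transform_within[where d=1]) (use t intG0_formula[OF c] in auto)
qed

lemma intG1_deriv:
  assumes c: "continuous_on {0..1} \<phi>" and t: "t \<in> {0..1}"
  shows "(intG G1 \<phi> has_real_derivative intG G2 \<phi> t) (at t within {0..1})"
proof -
  let ?F = "\<lambda>t. (t - 1) * P \<phi> (\<lambda>s. s) t + t * (P \<phi> (\<lambda>s. s - 1) 1 - P \<phi> (\<lambda>s. s - 1) t)"
  have "(?F has_real_derivative (P \<phi> (\<lambda>s. s) t + (P \<phi> (\<lambda>s. s - 1) 1 - P \<phi> (\<lambda>s. s - 1) t))) (at t within {0..1})"
    by (auto intro!: derivative_eq_intros P_deriv[OF c _ t] continuous_intros simp: field_simps power2_eq_square)
  then have "(?F has_real_derivative intG G2 \<phi> t) (at t within {0..1})"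
    using intG2_formula[OF c] t by simp
  then show ?thesis
    by (rule has_field_derivative_transform_within[where d=1]) (use t intG1_formula[OF c] in auto)
qed

lemma intG2_deriv:
  assumes c: "continuous_on {0..1} \<phi>" and t: "t \<in> {0..1}"
  shows "(intG G2 \<phi> has_real_derivative \<phi> t) (at t within {0..1})"
proof -
  let ?F = "\<lambda>t. P \<phi> (\<lambda>s. s) t + (P \<phi> (\<lambda>s. s - 1) 1 - P \<phi> (\<lambda>s. s - 1) t)"
  have "(?F has_real_derivative \<phi> t) (at t within {0..1})"
    by (auto intro!: derivative_eq_intros P_deriv[OF c _ t] continuous_intros simp: field_simps power2_eq_square)
  then show ?thesis
    by (rule has_field_derivative_transform_within[where d=1]) (use t intG2_formula[OF c] in auto)
qed

lemma hi_eq: "(f has_integral j) S \<Longrightarrow> j = i \<Longrightarrow> (f has_integral i) S"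
  by simp

lemma quad_int:
  fixes a b c0 c1 c2 :: real
  assumes "a \<le> b"
  shows "((\<lambda>s. c0 + c1* s + c2* s\<^sup>2) has_integral (c0*(b-a) + c1*(b\<^sup>2-a\<^sup>2)/2 + c2*(b^3-a^3)/3)) {a..b}"
proof -
  have "((\<lambda>s. c0 + c1* s + c2* s\<^sup>2) has_integral
      ((\<lambda>s. c0* s + c1* s\<^sup>2/2 + c2* s^3/3) b - (\<lambda>s. c0* s + c1* s\<^sup>2/2 + c2* s^3/3) a)) {a..b}"
    apply (rule fundamental_theorem_of_calculus[OF assms])
    apply (simp only: has_real_derivative_iff_has_vector_derivative[symmetric])
    apply (auto intro!: derivative_eq_intros simp: field_simps power2_eq_square)
    done
  then show ?thesis by (rule hi_eq) (simp add: field_simps)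
qed

lemma bound_from_split:
  fixes G :: "real \<Rightarrow> real \<Rightarrow> real"
  assumes i: "(\<lambda>s. G t s * \<phi> s) integrable_on {0..1}"
    and h: "((\<lambda>s. \<bar>G t s\<bar> * d) has_integral V) {0..1}"
    and b: "\<And>s. s \<in> {0..1} \<Longrightarrow> \<bar>\<phi> s\<bar> \<le> d"
  shows "\<bar>intG G \<phi> t\<bar> \<le> V"
proof -
  have "norm (integral {0..1} (\<lambda>s. G t s * \<phi> s)) \<le> integral {0..1} (\<lambda>s. \<bar>G t s\<bar> * d)"
    by (rule integral_norm_bound_integral[OF i])
      (use h b in \<open>auto simp: abs_mult intro: mult_left_mono\<close>)
  also have "\<dots> = V" by (rule integral_unique[OF h])
  finally show ?thesis unfolding intG_def by simp
qed

lemma G0_abs_bound: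
  assumes c: "continuous_on {0..1} \<phi>" and t: "0 \<le> t" "t \<le> 1"
    and b: "\<And>s. s \<in> {0..1} \<Longrightarrow> \<bar>\<phi> s\<bar> \<le> d"
  shows "\<bar>intG G0 \<phi> t\<bar> \<le> M0 * d"
proof -
  have d: "0 \<le> d" using b[of 0] by simp
  have h1: "((\<lambda>s. 0 + (d*(2*t-t\<^sup>2)/2)* s + (-d/2)* s\<^sup>2) has_integral
       (0*(t-0) + (d*(2*t-t\<^sup>2)/2)*(t\<^sup>2-0\<^sup>2)/2 + (-d/2)*(t^3-0^3)/3)) {0..t}"
    by (rule quad_int) (use t in simp)
  have h2: "((\<lambda>s. (d*t\<^sup>2/2) + (-d*t\<^sup>2/2)* s + 0* s\<^sup>2) has_integral
       ((d*t\<^sup>2/2)*(1-t) + (-d*t\<^sup>2/2)*(1\<^sup>2-t\<^sup>2)/2 + 0*(1^3-t^3)/3)) {t..1}"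
    by (rule quad_int) (use t in simp)
  have e1: "\<bar>G0 t s\<bar> * d = 0 + (d*(2*t-t\<^sup>2)/2)* s + (-d/2)* s\<^sup>2" if "0 \<le> s" "s \<le> t" for s
  proof -
    have "t\<^sup>2 - 2*t + s \<le> 0" using that t by (simp add: power2_eq_square) (smt (verit) mult_left_le_one_le)
    then have "G0 t s \<le> 0" using that by (simp add: G0_def mult_nonneg_nonpos)
    then show ?thesis using that by (simp add: G0_def field_simps power2_eq_square)
  qed
  have e2: "\<bar>G0 t s\<bar> * d = (d*t\<^sup>2/2) + (-d*t\<^sup>2/2)* s + 0* s\<^sup>2" if "t < s" "s \<le> 1" for s
  proof -
    have "G0 t s \<le> 0" using that by (simp add: G0_def mult_nonneg_nonpos)
    then show ?thesis using that by (simp add: G0_def field_simps power2_eq_square)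
  qed
  have "((\<lambda>s. \<bar>G0 t s\<bar> * d) has_integral
      (integral {0..t} (\<lambda>s. 0 + (d*(2*t-t\<^sup>2)/2)* s + (-d/2)* s\<^sup>2)
       + integral {t..1} (\<lambda>s. (d*t\<^sup>2/2) + (-d*t\<^sup>2/2)* s + 0* s\<^sup>2))) {0..1}"
    by (rule split_hasint[OF t]) (auto intro!: continuous_intros simp: e1 e2)
  then have H: "((\<lambda>s. \<bar>G0 t s\<bar> * d) has_integral
      (d * (t\<^sup>2/4 - t^3/6))) {0..1}"
    by (rule hi_eq) (unfold integral_unique[OF h1] integral_unique[OF h2], simp add: field_simps power2_eq_square power3_eq_cube)
  have "\<bar>intG G0 \<phi> t\<bar> \<le> d * (t\<^sup>2/4 - t^3/6)"
    by (rule bound_from_split[where G=G0 and t=t, OF intG_integrable(1)[OF c t] H b])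
  also have "\<dots> \<le> d * (1/12)"
  proof (rule mult_left_mono[OF _ d])
    have "0 \<le> (1-t)\<^sup>2 * (1 + 2*t)" using t by simp
    then show "t\<^sup>2/4 - t^3/6 \<le> 1/12" by (simp add: field_simps power2_eq_square power3_eq_cube) 
  qed
  finally show ?thesis by (simp add: M0_def)
qed

lemma G1_abs_bound:
  assumes c: "continuous_on {0..1} \<phi>" and t: "0 \<le> t" "t \<le> 1"
    and b: "\<And>s. s \<in> {0..1} \<Longrightarrow> \<bar>\<phi> s\<bar> \<le> d"
  shows "\<bar>intG G1 \<phi> t\<bar> \<le> M1 * d"
proof -
  have d: "0 \<le> d" using b[of 0] by simp
  have h1: "((\<lambda>s. 0 + (d*(1-t))* s + 0* s\<^sup>2) has_integral
       (0*(t-0) + (d*(1-t))*(t\<^sup>2-0\<^sup>2)/2 + 0*(t^3-0^3)/3)) {0..t}"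
    by (rule quad_int) (use t in simp)
  have h2: "((\<lambda>s. (d*t) + (-d*t)* s + 0* s\<^sup>2) has_integral
       ((d*t)*(1-t) + (-d*t)*(1\<^sup>2-t\<^sup>2)/2 + 0*(1^3-t^3)/3)) {t..1}"
    by (rule quad_int) (use t in simp)
  have e1: "\<bar>G1 t s\<bar> * d = 0 + (d*(1-t))* s + 0* s\<^sup>2" if "0 \<le> s" "s \<le> t" for s
  proof -
    have "G1 t s \<le> 0" using that t by (simp add: G1_def mult_nonneg_nonpos)
    then show ?thesis using that by (simp add: G1_def field_simps)
  qed
  have e2: "\<bar>G1 t s\<bar> * d = (d*t) + (-d*t)* s + 0* s\<^sup>2" if "t < s" "s \<le> 1" for s
  proof -
    have "G1 t s \<le> 0" using that t by (simp add: G1_def mult_nonneg_nonpos)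
    then show ?thesis using that by (simp add: G1_def field_simps)
  qed
  have "((\<lambda>s. \<bar>G1 t s\<bar> * d) has_integral
      (integral {0..t} (\<lambda>s. 0 + (d*(1-t))* s + 0* s\<^sup>2)
       + integral {t..1} (\<lambda>s. (d*t) + (-d*t)* s + 0* s\<^sup>2))) {0..1}"
    by (rule split_hasint[OF t]) (auto intro!: continuous_intros simp: e1 e2)
  then have H: "((\<lambda>s. \<bar>G1 t s\<bar> * d) has_integral (d * (t * (1 - t) / 2))) {0..1}"
    by (rule hi_eq) (unfold integral_unique[OF h1] integral_unique[OF h2], simp add: field_simps power2_eq_square power3_eq_cube)
  have "\<bar>intG G1 \<phi> t\<bar> \<le> d * (t * (1 - t) / 2)"
    by (rule bound_from_split[where G=G1 and t=t, OF intG_integrable(2)[OF c t] H b])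
  also have "\<dots> \<le> d * (1/8)"
  proof (rule mult_left_mono[OF _ d])
    have "0 \<le> (1 - 2*t)\<^sup>2" by simp
    then show "t * (1 - t) / 2 \<le> 1/8" by (simp add: field_simps power2_eq_square)
  qed
  finally show ?thesis by (simp add: M1_def)
qed

lemma G2_abs_bound:
  assumes c: "continuous_on {0..1} \<phi>" and t: "0 \<le> t" "t \<le> 1"
    and b: "\<And>s. s \<in> {0..1} \<Longrightarrow> \<bar>\<phi> s\<bar> \<le> d"
  shows "\<bar>intG G2 \<phi> t\<bar> \<le> M2 * d"
proof -
  have d: "0 \<le> d" using b[of 0] by simp
  have h1: "((\<lambda>s. 0 + d* s + 0* s\<^sup>2) has_integral
       (0*(t-0) + d*(t\<^sup>2-0\<^sup>2)/2 + 0*(t^3-0^3)/3)) {0..t}"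
    by (rule quad_int) (use t in simp)
  have h2: "((\<lambda>s. d + (-d)* s + 0* s\<^sup>2) has_integral
       (d*(1-t) + (-d)*(1\<^sup>2-t\<^sup>2)/2 + 0*(1^3-t^3)/3)) {t..1}"
    by (rule quad_int) (use t in simp)
  have e1: "\<bar>G2 t s\<bar> * d = 0 + d* s + 0* s\<^sup>2" if "0 \<le> s" "s \<le> t" for s
    using that by (simp add: G2_def)
  have e2: "\<bar>G2 t s\<bar> * d = d + (-d)* s + 0* s\<^sup>2" if "t < s" "s \<le> 1" for s
    using that by (simp add: G2_def field_simps)
  have "((\<lambda>s. \<bar>G2 t s\<bar> * d) has_integral
      (integral {0..t} (\<lambda>s. 0 + d* s + 0* s\<^sup>2)
       + integral {t..1} (\<lambda>s. d + (-d)* s + 0* s\<^sup>2))) {0..1}"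
    by (rule split_hasint[OF t]) (auto intro!: continuous_intros simp: e1 e2)
  then have H: "((\<lambda>s. \<bar>G2 t s\<bar> * d) has_integral (d * (t\<^sup>2/2 + (1-t)\<^sup>2/2))) {0..1}"
    by (rule hi_eq) (unfold integral_unique[OF h1] integral_unique[OF h2], simp add: field_simps power2_eq_square power3_eq_cube)
  have "\<bar>intG G2 \<phi> t\<bar> \<le> d * (t\<^sup>2/2 + (1-t)\<^sup>2/2)"
    by (rule bound_from_split[where G=G2 and t=t, OF intG_integrable(3)[OF c t] H b])
  also have "\<dots> \<le> d * (1/2)"
  proof (rule mult_left_mono[OF _ d])
    have "t * (1 - t) \<ge> 0" using t by simp
    then show "t\<^sup>2/2 + (1-t)\<^sup>2/2 \<le> 1/2" by (simp add: field_simps power2_eq_square)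
  qed
  finally show ?thesis by (simp add: M2_def)
qed

lemma within_to_at:
  assumes "t \<in> {0<..<1}" "(f has_real_derivative D) (at t within {0..1::real})"
  shows "(f has_real_derivative D) (at t)"
proof -
  have "at t within {0..1::real} = at t" by (rule at_within_interior) (use assms in simp)
  then show ?thesis using assms(2) by simp
qed

lemma deriv_cont_on:
  assumes "\<And>t. t \<in> {0..1} \<Longrightarrow> (f has_real_derivative D t) (at t within {0..1::real})"
  shows "continuous_on {0..1} f"
  unfolding continuous_on_eq_continuous_within using assms DERIV_continuous by blast

lemma intG_cont:
  assumes c: "continuous_on {0..1} \<phi>"
  shows "continuous_on {0..1} (intG G0 \<phi>)" "continuous_on {0..1} (intG G1 \<phi>)" "continuous_on {0..1} (intG G2 \<phi>)"
  by (rule deriv_cont_on, erule intG0_deriv[OF c], rule deriv_cont_on, erule intG1_deriv[OF c],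
      rule deriv_cont_on, erule intG2_deriv[OF c])

lemma intG_diff:
  assumes "continuous_on {0..1} \<phi>" "continuous_on {0..1} \<psi>" "0 \<le> t" "t \<le> 1"
  shows "intG G0 \<phi> t - intG G0 \<psi> t = intG G0 (\<lambda>s. \<phi> s - \<psi> s) t"
    "intG G1 \<phi> t - intG G1 \<psi> t = intG G1 (\<lambda>s. \<phi> s - \<psi> s) t"
    "intG G2 \<phi> t - intG G2 \<psi> t = intG G2 (\<lambda>s. \<phi> s - \<psi> s) t"
  unfolding intG_def
  by (simp_all add: right_diff_distrib integral_diff[OF intG_integrable(1)[OF assms(1,3,4)] intG_integrable(1)[OF assms(2,3,4)]]
       integral_diff[OF intG_integrable(2)[OF assms(1,3,4)] intG_integrable(2)[OF assms(2,3,4)]]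
       integral_diff[OF intG_integrable(3)[OF assms(1,3,4)] intG_integrable(3)[OF assms(2,3,4)]])

lemma maxnorm_upper:
  assumes "continuous_on {0..1} g" "t \<in> {0..1}"
  shows "\<bar>g t\<bar> \<le> maxnorm g"
proof -
  have "compact ((\<lambda>t. \<bar>g t\<bar>) ` {0..1})"
    by (rule compact_continuous_image) (auto intro!: continuous_intros assms)
  then have "bdd_above ((\<lambda>t. \<bar>g t\<bar>) ` {0..1})" by (intro bounded_imp_bdd_above compact_imp_bounded)
  then show ?thesis unfolding maxnorm_def by (rule cSup_upper[rotated]) (use assms in auto)
qed

lemma maxnorm_le:
  assumes "\<And>t. t \<in> {0..1} \<Longrightarrow> \<bar>g t\<bar> \<le> d"
  shows "maxnorm g \<le> d"
  unfolding maxnorm_def by (rule cSup_least) (use assms in auto)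

lemma unif_from_bound:
  fixes F :: "nat \<Rightarrow> real \<Rightarrow> real"
  assumes "\<And>k t. t \<in> S \<Longrightarrow> \<bar>F k t - g t\<bar> \<le> b k" "b \<longlonglongrightarrow> 0"
  shows "uniform_limit S F g sequentially"
proof (rule uniform_limitI)
  fix e :: real assume "e > 0"
  then have "eventually (\<lambda>k. b k < e) sequentially" using assms(2) by (rule order_tendstoD(2)[rotated])
  then show "\<forall>\<^sub>F n in sequentially. \<forall>x\<in>S. dist (F n x) (g x) < e"
  proof eventually_elim
    case (elim n)
    show ?case
    proof
      fix x assume "x \<in> S"
      from assms(1)[OF this, of n] elim show "dist (F n x) (g x) < e" by (simp add: dist_real_def)
    qed
  qed
qed



theorem theorem3:
  fixes f :: "real \<Rightarrow> real \<Rightarrow> real \<Rightarrow> real \<Rightarrow> real"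
    and M L0 L1 L2 :: real
    and u u1 u2 :: "real \<Rightarrow> real"
  assumes M_pos: "M > 0"
    and f_cont: "continuous_on (DM M) (\<lambda>(t, x, y, z). f t x y z)"
    and L_nonneg: "L0 \<ge> 0" "L1 \<ge> 0" "L2 \<ge> 0"
    and f_bound: "\<And>t x y z. (t, x, y, z) \<in> DM M \<Longrightarrow> \<bar>f t x y z\<bar> \<le> M"
    and f_lip: "\<And>t x1 y1 z1 x2 y2 z2. (t, x1, y1, z1) \<in> DM M \<Longrightarrow> (t, x2, y2, z2) \<in> DM M \<Longrightarrow>
        \<bar>f t x2 y2 z2 - f t x1 y1 z1\<bar> \<le> L0 * \<bar>x2 - x1\<bar> + L1 * \<bar>y2 - y1\<bar> + L2 * \<bar>z2 - z1\<bar>"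
    and q_lt: "L0 * M0 + L1 * M1 + L2 * M2 < 1"
    \<comment> \<open>u is a solution of the BVP, with u' = u1, u'' = u2 on [0,1]\<close>
    and u_d1: "\<And>t. t \<in> {0..1} \<Longrightarrow> (u has_real_derivative u1 t) (at t within {0..1})"
    and u_d2: "\<And>t. t \<in> {0..1} \<Longrightarrow> (u1 has_real_derivative u2 t) (at t within {0..1})"
    and u2_cont: "continuous_on {0..1} u2"
    and u_d3: "\<And>t. t \<in> {0<..<1} \<Longrightarrow> (u2 has_real_derivative f t (u t) (u1 t) (u2 t)) (at t)"
    and u_bc: "u 0 = 0" "u1 0 = 0" "u1 1 = 0"
    and u_bounds: "\<And>t. t \<in> {0..1} \<Longrightarrow> \<bar>u t\<bar> \<le> M0 * M \<and> \<bar>u1 t\<bar> \<le> M1 * M \<and> \<bar>u2 t\<bar> \<le> M2 * M"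
  shows
    "let q = L0 * M0 + L1 * M1 + L2 * M2;
         uk = (\<lambda>k. intG G0 (phi_it f k));
         yk = (\<lambda>k. intG G1 (phi_it f k));
         zk = (\<lambda>k. intG G2 (phi_it f k));
         p = (\<lambda>k. q ^ k / (1 - q) * maxnorm (\<lambda>t. phi_it f 1 t - phi_it f 0 t))
     in (\<forall>k. \<forall>t\<in>{0..1}. (uk k has_real_derivative yk k t) (at t within {0..1})
                       \<and> (yk k has_real_derivative zk k t) (at t within {0..1}))
      \<and> uniform_limit {0..1} uk u sequentially
      \<and> uniform_limit {0..1} yk u1 sequentially
      \<and> uniform_limit {0..1} zk u2 sequentially
      \<and> (\<forall>k. \<forall>t\<in>{0..1}. \<bar>uk k t - u t\<bar> \<le> M0 * p k
                       \<and> \<bar>yk k t - u1 t\<bar> \<le> M1 * p k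
                       \<and> \<bar>zk k t - u2 t\<bar> \<le> M2 * p k)"
proof -
  define q where "q = L0 * M0 + L1 * M1 + L2 * M2"
  have M0p: "M0 > 0" and M1p: "M1 > 0" and M2p: "M2 > 0" by (simp_all add: M0_def M1_def M2_def)
  have q0: "q \<ge> 0" unfolding q_def using L_nonneg M0p M1p M2p by simp
  have q1: "q < 1" using q_lt unfolding q_def .
  define T where "T = (\<lambda>(\<phi>::real\<Rightarrow>real) t::real. f t (intG G0 \<phi> t) (intG G1 \<phi> t) (intG G2 \<phi> t))"
  define X where "X = (\<lambda>\<phi>::real\<Rightarrow>real. continuous_on {0..1} \<phi> \<and> (\<forall>t\<in>{0..1}. \<bar>\<phi> t\<bar> \<le> (M::real)))"
  have fcomp: "continuous_on {0..1} (\<lambda>t. f t (a t) (b t) (c t))"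
    if "continuous_on {0..1} a" "continuous_on {0..1} b" "continuous_on {0..1} c"
       "\<And>t. t \<in> {0..1} \<Longrightarrow> (t, a t, b t, c t) \<in> DM M" for a b c
  proof -
    have "continuous_on {0..1} (\<lambda>t. (\<lambda>(t, x, y, z). f t x y z) (t, a t, b t, c t))"
      by (rule continuous_on_compose2[OF f_cont]) (auto intro!: continuous_intros that)
    then show ?thesis by simp
  qed
  have inDM: "(t, intG G0 \<phi> t, intG G1 \<phi> t, intG G2 \<phi> t) \<in> DM M" if "X \<phi>" "t \<in> {0..1}" for \<phi> t
    using that G0_abs_bound[of \<phi> t M] G1_abs_bound[of \<phi> t M] G2_abs_bound[of \<phi> t M]
    unfolding X_def DM_def by auto
  have TX: "X (T \<phi>)" if "X \<phi>" for \<phi>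
  proof -
    have c: "continuous_on {0..1} \<phi>" using that unfolding X_def by simp
    have "continuous_on {0..1} (T \<phi>)" unfolding T_def
      by (rule fcomp[OF intG_cont[OF c]]) (rule inDM[OF that])
    moreover have "\<bar>T \<phi> t\<bar> \<le> M" if "t \<in> {0..1}" for t
      unfolding T_def by (rule f_bound[OF inDM[OF \<open>X \<phi>\<close> that]])
    ultimately show ?thesis unfolding X_def by blast
  qed
  have contr: "\<bar>T \<phi> t - T \<psi> t\<bar> \<le> q * d"
    if "X \<phi>" "X \<psi>" "\<And>s. s \<in> {0..1} \<Longrightarrow> \<bar>\<phi> s - \<psi> s\<bar> \<le> d" "t \<in> {0..1}" for \<phi> \<psi> d t
  proof -
    have c1: "continuous_on {0..1} \<phi>" and c2: "continuous_on {0..1} \<psi>" using that unfolding X_def by auto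
    have cd: "continuous_on {0..1} (\<lambda>s. \<phi> s - \<psi> s)" by (intro continuous_intros c1 c2)
    have t: "0 \<le> t" "t \<le> 1" using that by auto
    have "\<bar>T \<phi> t - T \<psi> t\<bar> \<le> L0 * \<bar>intG G0 \<phi> t - intG G0 \<psi> t\<bar> + L1 * \<bar>intG G1 \<phi> t - intG G1 \<psi> t\<bar>
        + L2 * \<bar>intG G2 \<phi> t - intG G2 \<psi> t\<bar>"
      unfolding T_def by (rule f_lip[OF inDM[OF that(2,4)] inDM[OF that(1,4)]])
    also have "\<dots> \<le> L0 * (M0 * d) + L1 * (M1 * d) + L2 * (M2 * d)"
      unfolding intG_diff[OF c1 c2 t]
      by (intro add_mono mult_left_mono G0_abs_bound[OF cd t] G1_abs_bound[OF cd t] G2_abs_bound[OF cd t] that L_nonneg)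
    also have "\<dots> = q * d" unfolding q_def by (simp add: algebra_simps)
    finally show ?thesis .
  qed
  define ps where "ps = (\<lambda>t. f t (u t) (u1 t) (u2 t))"
  have cu: "continuous_on {0..1} u" by (rule deriv_cont_on, erule u_d1)
  have cu1: "continuous_on {0..1} u1" by (rule deriv_cont_on, erule u_d2)
  have uDM: "(t, u t, u1 t, u2 t) \<in> DM M" if "t \<in> {0..1}" for t
    using u_bounds[OF that] that unfolding DM_def by auto
  have cps: "continuous_on {0..1} ps" unfolding ps_def by (rule fcomp[OF cu cu1 u2_cont uDM])
  have Xps: "X ps" unfolding X_def using cps f_bound[OF uDM] ps_def by auto
  define c where "c = u2 0 - intG G2 ps 0"
  have e2: "u2 t - intG G2 ps t = c" if "t \<in> {0..1}" for t
  proof -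
    have "(\<lambda>t. u2 t - intG G2 ps t) t = (\<lambda>t. u2 t - intG G2 ps t) 0"
    proof (rule DERIV_isconst2[of 0 1])
      show "continuous_on {0..1} (\<lambda>t. u2 t - intG G2 ps t)"
        by (intro continuous_intros u2_cont intG_cont[OF cps])
      fix x :: real assume "0 < x" "x < 1"
      then have x: "x \<in> {0<..<1}" and x': "x \<in> {0..1}" by auto
      show "((\<lambda>t. u2 t - intG G2 ps t) has_real_derivative 0) (at x)"
        using DERIV_diff[OF u_d3[OF x] within_to_at[OF x intG2_deriv[OF cps x']]]
        by (simp add: ps_def)
    qed (use that in auto)
    then show ?thesis unfolding c_def by simp
  qed
  have e1': "u1 t - intG G1 ps t - c * t = 0" if "t \<in> {0..1}" for t
  proof -
    have "(\<lambda>t. u1 t - intG G1 ps t - c * t) t = (\<lambda>t. u1 t - intG G1 ps t - c * t) 0"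
    proof (rule DERIV_isconst2[of 0 1])
      show "continuous_on {0..1} (\<lambda>t. u1 t - intG G1 ps t - c * t)"
        by (intro continuous_intros cu1 intG_cont[OF cps])
      fix x :: real assume "0 < x" "x < 1"
      then have x: "x \<in> {0<..<1}" and x': "x \<in> {0..1}" by auto
      have "((\<lambda>t. u1 t - intG G1 ps t - c * t) has_real_derivative (u2 x - intG G2 ps x - c * 1)) (at x)"
        by (intro DERIV_diff DERIV_cmult[OF DERIV_ident] within_to_at[OF x u_d2[OF x']] within_to_at[OF x intG1_deriv[OF cps x']])
      then show "((\<lambda>t. u1 t - intG G1 ps t - c * t) has_real_derivative 0) (at x)"
        using e2[OF x'] by simp
    qed (use that in auto)
    then show ?thesis using u_bc intG_bc[OF cps] by simp
  qed
  have c0: "c = 0" using e1'[of 1] u_bc intG_bc[OF cps] by simp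
  have e1: "u1 t = intG G1 ps t" if "t \<in> {0..1}" for t using e1'[OF that] c0 by simp
  have e2': "u2 t = intG G2 ps t" if "t \<in> {0..1}" for t using e2[OF that] c0 by simp
  have e0: "u t = intG G0 ps t" if "t \<in> {0..1}" for t
  proof -
    have "(\<lambda>t. u t - intG G0 ps t) t = (\<lambda>t. u t - intG G0 ps t) 0"
    proof (rule DERIV_isconst2[of 0 1])
      show "continuous_on {0..1} (\<lambda>t. u t - intG G0 ps t)"
        by (intro continuous_intros cu intG_cont[OF cps])
      fix x :: real assume "0 < x" "x < 1"
      then have x: "x \<in> {0<..<1}" and x': "x \<in> {0..1}" by auto
      have "((\<lambda>t. u t - intG G0 ps t) has_real_derivative (u1 x - intG G1 ps x)) (at x)"
        by (intro DERIV_diff within_to_at[OF x u_d1[OF x']] within_to_at[OF x intG0_deriv[OF cps x']])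
      then show "((\<lambda>t. u t - intG G0 ps t) has_real_derivative 0) (at x)"
        using e1[OF x'] by simp
    qed (use that in auto)
    then show ?thesis using u_bc intG_bc[OF cps] by simp
  qed
  have Tps: "T ps t = ps t" if "t \<in> {0..1}" for t
    unfolding T_def using e0[OF that] e1[OF that] e2'[OF that] by (simp add: ps_def[of])
  have phiS: "phi_it f (Suc k) = T (phi_it f k)" for k by (simp add: T_def)
  have X0: "X (phi_it f 0)"
  proof -
    have in0: "(t, 0, 0, 0) \<in> DM M" if "t \<in> {0..1}" for t
      using that M_pos M0p M1p M2p unfolding DM_def by auto
    have "continuous_on {0..1} (phi_it f 0)"
      using fcomp[of "\<lambda>_. 0" "\<lambda>_. 0" "\<lambda>_. 0"] in0 by simp
    then show ?thesis unfolding X_def using f_bound[OF in0] by simp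
  qed
  have Xk: "X (phi_it f k)" for k
    by (induction k) (use X0 TX phiS in auto)
  have ck: "continuous_on {0..1} (phi_it f k)" for k using Xk[of k] unfolding X_def by simp
  define D where "D = maxnorm (\<lambda>t. phi_it f 0 t - ps t)"
  define N where "N = maxnorm (\<lambda>t. phi_it f 1 t - phi_it f 0 t)"
  have conv: "\<bar>phi_it f k t - ps t\<bar> \<le> q ^ k * D" if "t \<in> {0..1}" for k t
    using that
  proof (induction k arbitrary: t)
    case 0
    have "continuous_on {0..1} (\<lambda>t. phi_it f 0 t - ps t)" by (intro continuous_intros ck cps)
    from maxnorm_upper[OF this 0] show ?case unfolding D_def by simp
  next
    case (Suc k)
    have "\<bar>T (phi_it f k) t - T ps t\<bar> \<le> q * (q ^ k * D)"
      by (rule contr[OF Xk Xps Suc.IH Suc.prems])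
    then show ?case using Tps[OF Suc.prems] phiS[of k] by simp
  qed
  have "maxnorm (\<lambda>t. phi_it f 0 t - ps t) \<le> N + q * D"
  proof (rule maxnorm_le)
    fix t :: real assume t: "t \<in> {0..1}"
    have "continuous_on {0..1} (\<lambda>t. phi_it f 1 t - phi_it f 0 t)" by (intro continuous_intros ck)
    from maxnorm_upper[OF this t] have "\<bar>phi_it f 0 t - phi_it f 1 t\<bar> \<le> N" unfolding N_def
      by (simp only: abs_minus_commute)
    moreover have "\<bar>phi_it f 1 t - ps t\<bar> \<le> q * D" using conv[OF t, of 1] by simp
    ultimately show "\<bar>phi_it f 0 t - ps t\<bar> \<le> N + q * D" by arith
  qed
  then have "D \<le> N + q * D" by (simp only: D_def[symmetric])
  then have DN: "D \<le> N / (1 - q)" using q1 by (simp add: field_simps)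
  define p where "p = (\<lambda>k. q ^ k / (1 - q) * N)"
  have qkD: "\<bar>phi_it f k s - ps s\<bar> \<le> p k" if "s \<in> {0..1}" for k s
  proof -
    have "q ^ k * D \<le> q ^ k * (N / (1 - q))" by (rule mult_left_mono[OF DN]) (use q0 in simp)
    then show ?thesis using conv[OF that, of k] unfolding p_def by simp
  qed
  have bounds: "\<bar>intG G0 (phi_it f k) t - u t\<bar> \<le> M0 * p k \<and> \<bar>intG G1 (phi_it f k) t - u1 t\<bar> \<le> M1 * p k
      \<and> \<bar>intG G2 (phi_it f k) t - u2 t\<bar> \<le> M2 * p k" if "t \<in> {0..1}" for k t
  proof -
    have t: "0 \<le> t" "t \<le> 1" using that by auto
    have cd: "continuous_on {0..1} (\<lambda>s. phi_it f k s - ps s)" by (intro continuous_intros ck cps)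
    show ?thesis
      unfolding e0[OF that] e1[OF that] e2'[OF that] intG_diff[OF ck cps t]
      using G0_abs_bound[OF cd t qkD] G1_abs_bound[OF cd t qkD] G2_abs_bound[OF cd t qkD] by simp
  qed
  have p0: "p \<longlonglongrightarrow> 0" unfolding p_def
    by (intro tendsto_mult_left_zero tendsto_divide_zero LIMSEQ_power_zero) (use q0 q1 in simp)
  have p0': "(\<lambda>k. Mi * p k) \<longlonglongrightarrow> 0" for Mi :: real
    using tendsto_mult_right_zero[OF p0] by simp
  have pk: "q ^ k / (1 - q) * N = p k" for k unfolding p_def by simp
  show ?thesis
    unfolding Let_def q_def[symmetric] N_def[symmetric] pk
  proof (intro conjI allI ballI)
    fix k t assume t: "(t::real) \<in> {0..1}"
    show "(intG G0 (phi_it f k) has_real_derivative intG G1 (phi_it f k) t) (at t within {0..1})"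
      by (rule intG0_deriv[OF ck t])
    show "(intG G1 (phi_it f k) has_real_derivative intG G2 (phi_it f k) t) (at t within {0..1})"
      by (rule intG1_deriv[OF ck t])
    show "\<bar>intG G0 (phi_it f k) t - u t\<bar> \<le> M0 * p k" using bounds[OF t] by simp
    show "\<bar>intG G1 (phi_it f k) t - u1 t\<bar> \<le> M1 * p k" using bounds[OF t] by simp
    show "\<bar>intG G2 (phi_it f k) t - u2 t\<bar> \<le> M2 * p k" using bounds[OF t] by simp
  next
    show "uniform_limit {0..1} (\<lambda>k. intG G0 (phi_it f k)) u sequentially"
      by (rule unif_from_bound[OF _ p0'[of M0]]) (use bounds in blast)
    show "uniform_limit {0..1} (\<lambda>k. intG G1 (phi_it f k)) u1 sequentially"
      by (rule unif_from_bound[OF _ p0'[of M1]]) (use bounds in blast)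
    show "uniform_limit {0..1} (\<lambda>k. intG G2 (phi_it f k)) u2 sequentially"
      by (rule unif_from_bound[OF _ p0'[of M2]]) (use bounds in blast)
  qed
qed


end
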